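(* Let $G=(V,E,\mathcal{W})$ be a matrix-weighted network as described in the context. Then $G$ is coherent if and only if there is a partition $\{V_1,\dots,V_{l_p}\}$ of $V$ such that (i) every edge $(v_i,v_j)\in E$ with $v_i,v_j$ in the same part has transformation $\mathbf{R}_{ij}=\mathbf{I}$; (ii) for every ordered pair of parts $(V_a,V_b)$, all edges $(v_i,v_j)\in E$ with $v_i\in V_a$, $v_j\in V_b$ have the same transformation $\mathbf{R}_{ij}$; and (iii) considering each part as a super node, joined by a directed edge from $V_a$ to $V_b$ ($a\ne b$) carrying this common transformation whenever such edges exist, the transformation of every directed cycle of super nodes is $\mathbf{I}$.
   Context: A matrix-weighted network (MWN) is $G=(V,E,\mathcal{W})$ with node set $V=\{v_1,\dots,v_n\}$ and edge set $E\subset V\times V$, whose underlying graph is connected. For a fixed dimension $n_d$, each ordered pair $(i,j)$ carries a matrix $\mathbf{W}_{ij}\in\mathbb{R}^{n_d\times n_d}$, with $\mathbf{W}_{ij}=0$ if and only if $(v_i,v_j)\notin E$, and $\mathbf{W}_{ij}=\mathbf{W}_{ji}^T$ for all $i,j$. Write $w_{ij}=\|\mathbf{W}_{ij}\|_2$ and, for edges, $\mathbf{R}_{ij}=\mathbf{W}_{ij}/w_{ij}$, the transformation of the edge $(v_i,v_j)$; $\mathbf{I}$ denotes the $n_d\times n_d$ identity. The transformation of a directed path or directed cycle with consecutive edges $e_1,\dots,e_k$ is the product $\mathbf{R}(e_1)\mathbf{R}(e_2)\cdots\mathbf{R}(e_k)$; a directed cycle is a sequence of edges $(v_{i_1},v_{i_2}),(v_{i_2},v_{i_3}),\dots,(v_{i_l},v_{i_1})\in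 E$ ($l\ge 2$, $v_{i_1},\dots,v_{i_l}$ distinct), with transformation $\mathbf{R}_{i_1i_2}\mathbf{R}_{i_2i_3}\cdots\mathbf{R}_{i_li_1}$. The MWN $G$ is called coherent if the transformation of every directed cycle is $\mathbf{I}$ (in particular, taking 2-cycles, all $\mathbf{R}_{ij}$ are then orthogonal). *)

theory Defs
  imports "HOL-Analysis.Analysis" "HOL-Library.Disjoint_Sets"
begin

text \<open>Matrix-weighted network on a finite node type 'v (V = UNIV), with
  n_d x n_d real matrices (n_d = CARD('d)).  W i j is the weight matrix of
  the ordered pair (i,j); (i,j) is an edge iff W i j \<noteq> 0.\<close>

definition mwn :: "('v::finite \<Rightarrow> 'v \<Rightarrow> real^'d^'d) \<Rightarrow> bool" where
  "mwn W \<longleftrightarrow>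
     (\<forall>i j. W i j = transpose (W j i)) \<and>
     (\<forall>i. W i i = 0) \<and>
     (\<forall>i j. (i, j) \<in> {(a, b). W a b \<noteq> 0}\<^sup>*)"

definition is_edge :: "('v \<Rightarrow> 'v \<Rightarrow> real^'d^'d) \<Rightarrow> 'v \<Rightarrow> 'v \<Rightarrow> bool" where
  "is_edge W i j \<longleftrightarrow> W i j \<noteq> 0"

text \<open>Spectral norm w_ij = ||W_ij||_2 (operator norm) and transformation R_ij = W_ij / w_ij.\<close>
definition wnorm :: "real^'d^'d \<Rightarrow> real" where
  "wnorm A = onorm (\<lambda>x. A *v x)"

definition transf :: "('v \<Rightarrow> 'v \<Rightarrow> real^'d^'d) \<Rightarrow> 'v \<Rightarrow> 'v \<Rightarrow> real^'d^'d" where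
  "transf W i j = (1 / wnorm (W i j)) *\<^sub>R W i j"

text \<open>Directed cycle in a digraph given by adjacency adj on vertex set S:
  list of l \<ge> 2 distinct vertices, consecutive (cyclically) adjacent.\<close>
definition is_dcycle :: "'a set \<Rightarrow> ('a \<Rightarrow> 'a \<Rightarrow> bool) \<Rightarrow> 'a list \<Rightarrow> bool" where
  "is_dcycle S adj vs \<longleftrightarrow> 2 \<le> length vs \<and> distinct vs \<and> set vs \<subseteq> S \<and>
     (\<forall>k < length vs. adj (vs ! k) (vs ! ((k + 1) mod length vs)))"

text \<open>Transformation of the cycle: ordered product f(v1,v2) f(v2,v3) ... f(vl,v1).\<close>
definition cycle_transf :: "('a \<Rightarrow> 'a \<Rightarrow> real^'d^'d) \<Rightarrow> 'a list \<Rightarrow> real^'d^'d" where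
  "cycle_transf f vs =
     foldr (**) (map (\<lambda>k. f (vs ! k) (vs ! ((k + 1) mod length vs))) [0..<length vs]) (mat 1)"

definition coherent :: "('v::finite \<Rightarrow> 'v \<Rightarrow> real^'d^'d) \<Rightarrow> bool" where
  "coherent W \<longleftrightarrow>
     (\<forall>vs. is_dcycle UNIV (is_edge W) vs \<longrightarrow> cycle_transf (transf W) vs = mat 1)"

text \<open>Super-node digraph on the parts of a partition P.\<close>
definition super_edge :: "('v \<Rightarrow> 'v \<Rightarrow> real^'d^'d) \<Rightarrow> 'v set \<Rightarrow> 'v set \<Rightarrow> bool" where
  "super_edge W A B \<longleftrightarrow> A \<noteq> B \<and> (\<exists>i\<in>A. \<exists>j\<in>B. is_edge W i j)"

end

theory Submission
  imports Defs
begin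

fun pprod :: "('a \<Rightarrow> 'a \<Rightarrow> real^'d^'d) \<Rightarrow> 'a list \<Rightarrow> real^'d^'d" where
  "pprod f (x # y # r) = f x y ** pprod f (y # r)"
| "pprod f _ = mat 1"

lemma pprod_split: "pprod f (xs @ a # ys) = pprod f (xs @ [a]) ** pprod f (a # ys)"
proof (induction xs)
  case Nil
  then show ?case by (simp add: matrix_mul_lid)
next
  case (Cons x xs)
  then show ?case by (cases xs) (simp_all add: matrix_mul_assoc)
qed

lemma successively_nth:
  "successively P xs \<Longrightarrow> Suc k < length xs \<Longrightarrow> P (xs ! k) (xs ! Suc k)"
proof (induction xs arbitrary: k)
  case Nil
  then show ?case by simp
next
  case (Cons x xs)
  then show ?case by (cases k) (auto simp: successively_Cons hd_conv_nth)
qed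

lemma pprod_foldr:
  "pprod f xs = foldr (**) (map (\<lambda>k. f (xs ! k) (xs ! Suc k)) [0..<length xs - 1]) (mat 1)"
proof (induction f xs rule: pprod.induct)
  case (1 f x y r)
  have "[0..<Suc (length r)] = 0 # map Suc [0..<length r]"
    by (simp add: map_Suc_upt upt_conv_Cons del: upt_Suc)
  then show ?case using 1 by (simp add: o_def)
qed auto

lemma cycle_pprod:
  assumes "vs \<noteq> []"
  shows "cycle_transf f vs = pprod f (vs @ [hd vs])"
proof -
  have "cycle_transf f vs = foldr (**) (map (\<lambda>k. f ((vs @ [hd vs]) ! k) ((vs @ [hd vs]) ! Suc k)) [0..<length vs]) (mat 1)"
    unfolding cycle_transf_def
  proof (intro arg_cong[where f="\<lambda>l. foldr (**) l (mat 1)"] map_cong refl)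
    fix k assume k: "k \<in> set [0..<length vs]"
    then have k: "k < length vs" by simp
    have 1: "(vs @ [hd vs]) ! k = vs ! k" using k by (simp add: nth_append)
    have 2: "(vs @ [hd vs]) ! Suc k = vs ! ((k + 1) mod length vs)"
    proof (cases "Suc k < length vs")
      case True then show ?thesis by (simp add: nth_append)
    next
      case False
      then have "Suc k = length vs" using k by simp
      then show ?thesis using assms by (simp add: nth_append hd_conv_nth)
    qed
    show "f (vs ! k) (vs ! ((k + 1) mod length vs)) = f ((vs @ [hd vs]) ! k) ((vs @ [hd vs]) ! Suc k)"
      using 1 2 by simp
  qed
  then show ?thesis by (simp add: pprod_foldr)
qed

lemma succ_split:
  "successively P (xs @ a # ys) \<longleftrightarrow> successively P (xs @ [a]) \<and> successively P (a # ys)"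
proof (induction xs)
  case Nil then show ?case by simp
next
  case (Cons x xs) then show ?case by (cases xs) auto
qed

lemma closed_walk:
  assumes H: "\<forall>Vs. is_dcycle P adj Vs \<longrightarrow> cycle_transf T Vs = mat 1"
    and irr: "\<And>A B. adj A B \<Longrightarrow> A \<noteq> B"
  shows "xs \<noteq> [] \<Longrightarrow> hd xs = last xs \<Longrightarrow> set xs \<subseteq> P \<Longrightarrow>
    successively (\<lambda>A B. A = B \<or> adj A B) xs \<Longrightarrow>
    pprod (\<lambda>A B. if A = B then mat 1 else T A B) xs = mat 1"
proof (induction xs rule: length_induct)
  case (1 xs)
  let ?T' = "\<lambda>A B. if A = B then mat 1 else T A B"
  let ?Q = "\<lambda>A B. A = B \<or> adj A B"
  note ne = "1.prems"(1) and cl = "1.prems"(2) and sub = "1.prems"(3) and sc = "1.prems"(4)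
  define bl where "bl = butlast xs"
  obtain c where xs_eq: "xs = bl @ [c]" and cdef: "last xs = c"
    using ne append_butlast_last_id bl_def by metis
  show ?case
  proof (cases "distinct bl")
    case True
    show ?thesis
    proof (cases "length bl \<ge> 2")
      case False
      then have "bl = [] \<or> (\<exists>a. bl = [a])"
        by (cases bl rule: remdups_adj.cases) auto
      then show ?thesis
      proof
        assume "bl = []" then have "xs = [c]" using xs_eq by simp
        then show ?thesis by simp
      next
        assume "\<exists>a. bl = [a]"
        then obtain a where "bl = [a]" by blast
        then have "xs = [a, a]" using xs_eq cl cdef by simp
        then show ?thesis by simp
      qed
    next
      case len: True
      have blne: "bl \<noteq> []" using len by auto
      have hdx: "hd xs = hd bl" using xs_eq blne by (metis hd_append2)
      have xs2: "xs = bl @ [hd bl]" using xs_eq cl hdx cdef by simp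
      have dc: "is_dcycle P adj bl"
        unfolding is_dcycle_def
      proof (intro conjI allI impI)
        show "2 \<le> length bl" by fact
        show "distinct bl" by fact
        show "set bl \<subseteq> P" using sub xs_eq by auto
        fix k assume k: "k < length bl"
        have "?Q (xs ! k) (xs ! Suc k)"
          using successively_nth[OF sc, of k] k xs_eq by simp
        moreover have "xs ! k = bl ! k" using k xs2 by (simp add: nth_append)
        moreover have "xs ! Suc k = bl ! ((k + 1) mod length bl)"
        proof (cases "Suc k < length bl")
          case True then show ?thesis using xs2 by (simp add: nth_append)
        next
          case False
          then have "Suc k = length bl" using k by simp
          then show ?thesis using xs2 blne by (simp add: nth_append hd_conv_nth)
        qed
        moreover have "bl ! k \<noteq> bl ! ((k + 1) mod length bl)"
        proof -
          have "k \<noteq> (k + 1) mod length bl"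
          proof (cases "Suc k < length bl")
            case True then show ?thesis by simp
          next
            case False
            then have "Suc k = length bl" using k by simp
            then show ?thesis using len by auto
          qed
          then show ?thesis using \<open>distinct bl\<close> k
            by (simp add: nth_eq_iff_index_eq blne)
        qed
        ultimately show "adj (bl ! k) (bl ! ((k + 1) mod length bl))" by auto
      qed
      have "cycle_transf ?T' bl = cycle_transf T bl"
        unfolding cycle_transf_def
      proof (intro arg_cong[where f="\<lambda>l. foldr (**) l (mat 1)"] map_cong refl)
        fix k assume "k \<in> set [0..<length bl]"
        then have k: "k < length bl" by simp
        have "bl ! k \<noteq> bl ! ((k + 1) mod length bl)"
          using dc k irr unfolding is_dcycle_def by blast
        then show "?T' (bl ! k) (bl ! ((k + 1) mod length bl)) = T (bl ! k) (bl ! ((k + 1) mod length bl))"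
          by simp
      qed
      then show ?thesis using H dc cycle_pprod[OF blne, of ?T'] xs2 by simp
    qed
  next
    case False
    then obtain p a q r where bl_eq: "bl = p @ [a] @ q @ [a] @ r"
      using not_distinct_decomp by blast
    have xs3: "xs = p @ a # q @ a # r @ [c]" using xs_eq bl_eq by simp
    define w1 where "w1 = a # q @ [a]"
    define w2 where "w2 = p @ a # r @ [c]"
    have l1: "length w1 < length xs" using xs3 w1_def by simp
    have l2: "length w2 < length xs" using xs3 w2_def by simp
    have sc3: "successively ?Q (p @ a # q @ a # r @ [c])" using sc xs3 by simp
    have s1: "successively ?Q w1" using sc3 unfolding w1_def
      using succ_split[of ?Q p a "q @ a # r @ [c]"] succ_split[of ?Q "a # q" a "r @ [c]"] by simp
    have s2: "successively ?Q w2" using sc3 unfolding w2_def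
      using succ_split[of ?Q p a "q @ a # r @ [c]"] succ_split[of ?Q "a # q" a "r @ [c]"]
        succ_split[of ?Q p a "r @ [c]"] by simp
    have p1: "pprod ?T' w1 = mat 1"
    proof -
      have "set w1 \<subseteq> P" using sub xs3 unfolding w1_def by auto
      moreover have "w1 \<noteq> []" "hd w1 = last w1" unfolding w1_def by auto
      ultimately show ?thesis using "1.IH"[rule_format, OF l1] s1 by blast
    qed
    have "hd w2 = last w2"
      using cl xs3 unfolding w2_def by (cases p) auto
    moreover have "set w2 \<subseteq> P" using sub xs3 unfolding w2_def by auto
    moreover have "w2 \<noteq> []" unfolding w2_def by auto
    ultimately have p2: "pprod ?T' w2 = mat 1"
      using "1.IH"[rule_format, OF l2] s2 by blast
    have "pprod ?T' xs = pprod ?T' (p @ [a]) ** (pprod ?T' (a # q @ [a]) ** pprod ?T' (a # r @ [c]))"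
      using xs3 pprod_split[of ?T' p a "q @ a # r @ [c]"] pprod_split[of ?T' "a # q" a "r @ [c]"]
      by simp
    also have "\<dots> = pprod ?T' (p @ [a]) ** pprod ?T' (a # r @ [c])"
      using p1 unfolding w1_def by (simp add: matrix_mul_lid)
    also have "\<dots> = pprod ?T' w2" unfolding w2_def using pprod_split[of ?T' p a "r @ [c]"] by simp
    finally show ?thesis using p2 by simp
  qed
qed


lemma successively_nthI:
  "(\<And>k. Suc k < length xs \<Longrightarrow> P (xs ! k) (xs ! Suc k)) \<Longrightarrow> successively P xs"
proof (induction xs)
  case Nil then show ?case by simp
next
  case (Cons x xs)
  have "successively P xs" using Cons.prems by (intro Cons.IH) (metis Suc_less_eq length_Cons nth_Cons_Suc)
  moreover have "xs \<noteq> [] \<Longrightarrow> P x (hd xs)" using Cons.prems[of 0] by (simp add: hd_conv_nth)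
  ultimately show ?case by (auto simp: successively_Cons)
qed

lemma pprod_map:
  assumes "\<And>x y. E x y \<Longrightarrow> f x y = g (h x) (h y)"
  shows "successively E us \<Longrightarrow> pprod f us = pprod g (map h us)"
proof (induction us)
  case Nil then show ?case by simp
next
  case (Cons x us) then show ?case by (cases us) (auto simp: assms)
qed

theorem theorem1:
  fixes W :: "'v::finite \<Rightarrow> 'v \<Rightarrow> real^'d^'d"
  assumes "mwn W"
  shows "coherent W \<longleftrightarrow>
    (\<exists>P T. partition_on UNIV P \<and>
       (\<forall>A\<in>P. \<forall>i\<in>A. \<forall>j\<in>A. is_edge W i j \<longrightarrow> transf W i j = mat 1) \<and>
       (\<forall>A\<in>P. \<forall>B\<in>P. \<forall>i\<in>A. \<forall>j\<in>B. is_edge W i j \<longrightarrow> transf W i j = T A B) \<and>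
       (\<forall>Vs. is_dcycle P (super_edge W) Vs \<longrightarrow> cycle_transf T Vs = mat 1))"
proof
  have diag: "\<And>i. \<not> is_edge W i i" using assms unfolding mwn_def is_edge_def by blast
  assume coh: "coherent W"
  define P :: "'v set set" where "P = (\<lambda>x. {x}) ` UNIV"
  define T where "T = (\<lambda>A B. transf W (the_elem A) (the_elem B))"
  have "partition_on UNIV P" unfolding P_def by (rule partition_on_singletons)
  moreover have "\<forall>A\<in>P. \<forall>i\<in>A. \<forall>j\<in>A. is_edge W i j \<longrightarrow> transf W i j = mat 1"
    unfolding P_def using diag by auto
  moreover have "\<forall>A\<in>P. \<forall>B\<in>P. \<forall>i\<in>A. \<forall>j\<in>B. is_edge W i j \<longrightarrow> transf W i j = T A B"
    unfolding P_def T_def by auto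
  moreover have "\<forall>Vs. is_dcycle P (super_edge W) Vs \<longrightarrow> cycle_transf T Vs = mat 1"
  proof (intro allI impI)
    fix Vs assume dc: "is_dcycle P (super_edge W) Vs"
    define vs where "vs = map the_elem Vs"
    have sing: "\<And>A. A \<in> set Vs \<Longrightarrow> A = {the_elem A}"
      using dc unfolding is_dcycle_def P_def by auto
    have Vs_eq: "Vs = map (\<lambda>v. {v}) vs" unfolding vs_def
    proof (rule nth_equalityI)
      show "length Vs = length (map (\<lambda>v. {v}) (map the_elem Vs))" by simp
      fix i assume "i < length Vs"
      then have "Vs ! i = {the_elem (Vs ! i)}" using sing nth_mem by blast
      then show "Vs ! i = map (\<lambda>v. {v}) (map the_elem Vs) ! i" using \<open>i < length Vs\<close> by simp
    qed
    have "is_dcycle UNIV (is_edge W) vs"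
      unfolding is_dcycle_def
    proof (intro conjI allI impI)
      show "2 \<le> length vs" using dc unfolding is_dcycle_def vs_def by simp
      show "distinct vs" using dc Vs_eq unfolding is_dcycle_def by (simp add: distinct_map)
      show "set vs \<subseteq> UNIV" by simp
      fix k assume k: "k < length vs"
      have "super_edge W (Vs ! k) (Vs ! ((k + 1) mod length Vs))"
        using dc k unfolding is_dcycle_def vs_def by simp
      moreover have "(k + 1) mod length vs < length vs" using k by (intro mod_less_divisor) linarith
      ultimately show "is_edge W (vs ! k) (vs ! ((k + 1) mod length vs))"
        using k unfolding Vs_eq super_edge_def by simp
    qed
    then have "cycle_transf (transf W) vs = mat 1" using coh unfolding coherent_def by blast
    moreover have "cycle_transf T Vs = cycle_transf (transf W) vs"
      unfolding cycle_transf_def Vs_eq T_def length_map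
    proof (intro arg_cong[where f="\<lambda>l. foldr (**) l (mat 1)"] map_cong refl)
      fix k assume "k \<in> set [0..<length vs]"
      then have k: "k < length vs" by simp
      then have k2: "(k + 1) mod length vs < length vs" by (intro mod_less_divisor) linarith
      show "transf W (the_elem (map (\<lambda>v. {v}) vs ! k)) (the_elem (map (\<lambda>v. {v}) vs ! ((k + 1) mod length vs)))
          = transf W (vs ! k) (vs ! ((k + 1) mod length vs))"
        using k k2 by simp
    qed
    ultimately show "cycle_transf T Vs = mat 1" by simp
  qed
  ultimately show "\<exists>P T. partition_on UNIV P \<and>
       (\<forall>A\<in>P. \<forall>i\<in>A. \<forall>j\<in>A. is_edge W i j \<longrightarrow> transf W i j = mat 1) \<and>
       (\<forall>A\<in>P. \<forall>B\<in>P. \<forall>i\<in>A. \<forall>j\<in>B. is_edge W i j \<longrightarrow> transf W i j = T A B) \<and>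
       (\<forall>Vs. is_dcycle P (super_edge W) Vs \<longrightarrow> cycle_transf T Vs = mat 1)" by blast
next
  assume "\<exists>P T. partition_on UNIV P \<and>
       (\<forall>A\<in>P. \<forall>i\<in>A. \<forall>j\<in>A. is_edge W i j \<longrightarrow> transf W i j = mat 1) \<and>
       (\<forall>A\<in>P. \<forall>B\<in>P. \<forall>i\<in>A. \<forall>j\<in>B. is_edge W i j \<longrightarrow> transf W i j = T A B) \<and>
       (\<forall>Vs. is_dcycle P (super_edge W) Vs \<longrightarrow> cycle_transf T Vs = mat 1)"
  then obtain P T where part: "partition_on UNIV P"
    and h1: "\<forall>A\<in>P. \<forall>i\<in>A. \<forall>j\<in>A. is_edge W i j \<longrightarrow> transf W i j = mat 1"
    and h2: "\<forall>A\<in>P. \<forall>B\<in>P. \<forall>i\<in>A. \<forall>j\<in>B. is_edge W i j \<longrightarrow> transf W i j = T A B"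
    and h3: "\<forall>Vs. is_dcycle P (super_edge W) Vs \<longrightarrow> cycle_transf T Vs = mat 1"
    by blast
  define pt where "pt = (\<lambda>v. SOME A. A \<in> P \<and> v \<in> A)"
  have pt: "\<And>v. pt v \<in> P \<and> v \<in> pt v"
  proof -
    fix v
    have "\<exists>A. A \<in> P \<and> v \<in> A" using partition_onD1[OF part] by blast
    then show "pt v \<in> P \<and> v \<in> pt v" unfolding pt_def by (rule someI_ex)
  qed
  let ?T' = "\<lambda>A B. if A = B then mat 1 else T A B"
  have eq: "\<And>x y. is_edge W x y \<Longrightarrow> transf W x y = ?T' (pt x) (pt y)"
  proof -
    fix x y assume e: "is_edge W x y"
    show "transf W x y = ?T' (pt x) (pt y)"
    proof (cases "pt x = pt y")
      case True
      have "x \<in> pt y" using pt[of x] True by simp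
      then have "transf W x y = mat 1" using h1 pt[of y] e by blast
      then show ?thesis using True by simp
    next
      case False
      have "transf W x y = T (pt x) (pt y)" using h2 pt[of x] pt[of y] e by blast
      then show ?thesis using False by simp
    qed
  qed
  have adj: "\<And>x y. is_edge W x y \<Longrightarrow> pt x = pt y \<or> super_edge W (pt x) (pt y)"
    using pt unfolding super_edge_def by blast
  show "coherent W" unfolding coherent_def
  proof (intro allI impI)
    fix vs assume dc: "is_dcycle UNIV (is_edge W) vs"
    then have ne: "vs \<noteq> []" unfolding is_dcycle_def by auto
    define us where "us = vs @ [hd vs]"
    have sus: "successively (is_edge W) us"
    proof (rule successively_nthI)
      fix k assume k: "Suc k < length us"
      then have k': "k < length vs" unfolding us_def by simp
      have "us ! k = vs ! k" using k' unfolding us_def by (simp add: nth_append)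
      moreover have "us ! Suc k = vs ! ((k + 1) mod length vs)"
      proof (cases "Suc k < length vs")
        case True then show ?thesis unfolding us_def by (simp add: nth_append)
      next
        case False
        then have "Suc k = length vs" using k' by simp
        then show ?thesis unfolding us_def using ne by (simp add: nth_append hd_conv_nth)
      qed
      ultimately show "is_edge W (us ! k) (us ! Suc k)"
        using dc k' unfolding is_dcycle_def by simp
    qed
    have "cycle_transf (transf W) vs = pprod (transf W) us"
      unfolding us_def by (rule cycle_pprod[OF ne])
    also have "\<dots> = pprod ?T' (map pt us)"
      by (rule pprod_map[where E="is_edge W" and f="transf W" and g="?T'" and h=pt, OF eq sus])
    also have "\<dots> = mat 1"
    proof (rule closed_walk[OF h3])
      show "\<And>A B. super_edge W A B \<Longrightarrow> A \<noteq> B" unfolding super_edge_def by blast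
      show "map pt us \<noteq> []" unfolding us_def by simp
      show "hd (map pt us) = last (map pt us)" unfolding us_def using ne by (cases vs) auto
      show "set (map pt us) \<subseteq> P" using pt by auto
      show "successively (\<lambda>A B. A = B \<or> super_edge W A B) (map pt us)"
        unfolding successively_map by (rule successively_mono[OF sus]) (rule adj)
    qed
    finally show "cycle_transf (transf W) vs = mat 1" .
  qed
qed

end
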